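(* Let $\mathcal{X},\mathcal{Y}$ be finite alphabets, $P_X$ a fully supported PMF on $\mathcal{X}$ and $P_{Y|X}$ a transition kernel from $\mathcal{X}$ to $\mathcal{Y}$; write $P_{XY}=P_X\otimes P_{Y|X}$. Let $K\geq 2$, let $X_1,\ldots,X_K$ be IID with law $P_X$, let $\pi\in S_K$ be a cycle of length $K$, and set $\tilde X_j=X_{\pi(j)}$ for $j\in[K]$. Then $$\mathbb{E}\Big[\exp\Big(-\sum_{j=1}^K d_{P_{Y|X}}(X_j,\tilde X_j)\Big)\Big]\leq e^{-K\psi_2(P_{XY})},$$ where $\psi_2(P_{XY})=\min_{Q_{X_1X_2}\in\mathcal{P}(\mathcal{X}^2)}\big\{\tfrac12 D_{\mathrm{KL}}(Q_{X_1X_2}\|P_X^{\otimes2})+d_{P_{Y|X}}(Q_{X_1X_2})\big\}$.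
   Context: For $x_1,x_2\in\mathcal{X}$, $d_{P_{Y|X}}(x_1,x_2)=-\log\sum_{y\in\mathcal{Y}}\sqrt{P_{Y|X}(y|x_1)P_{Y|X}(y|x_2)}$ (Bhattacharyya distance), and for a joint PMF $Q_{X_1X_2}$ on $\mathcal{X}^2$, $d_{P_{Y|X}}(Q_{X_1X_2})=\sum_{x_1,x_2}Q_{X_1X_2}(x_1,x_2)d_{P_{Y|X}}(x_1,x_2)$. $\mathcal{P}(\mathcal{X}^2)$ denotes the probability simplex on $\mathcal{X}^2$. *)

theory Defs
  imports "HOL-Probability.Probability"
begin

definition bhatt_coeff :: "('x \<Rightarrow> 'y::finite pmf) \<Rightarrow> 'x \<Rightarrow> 'x \<Rightarrow> real" where
  "bhatt_coeff W x1 x2 = (\<Sum>y\<in>UNIV. sqrt (pmf (W x1) y * pmf (W x2) y))"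

definition bhatt_dist :: "('x \<Rightarrow> 'y::finite pmf) \<Rightarrow> 'x \<Rightarrow> 'x \<Rightarrow> ereal" where
  "bhatt_dist W x1 x2 =
     (if bhatt_coeff W x1 x2 = 0 then \<infinity> else ereal (- ln (bhatt_coeff W x1 x2)))"

text \<open>d(Q) = sum of Q(x1,x2) d(x1,x2) (with 0 * infinity = 0).\<close>
definition bhatt_dist_joint :: "('x::finite \<Rightarrow> 'y::finite pmf) \<Rightarrow> ('x \<times> 'x) pmf \<Rightarrow> ereal" where
  "bhatt_dist_joint W Q = (\<Sum>z\<in>UNIV. ereal (pmf Q z) * bhatt_dist W (fst z) (snd z))"

definition kl_div :: "'a::finite pmf \<Rightarrow> 'a pmf \<Rightarrow> ereal" where
  "kl_div Q R = (\<Sum>z\<in>UNIV.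
      if pmf Q z = 0 then 0
      else if pmf R z = 0 then \<infinity>
      else ereal (pmf Q z * ln (pmf Q z / pmf R z)))"

definition psi2 :: "'x::finite pmf \<Rightarrow> ('x \<Rightarrow> 'y::finite pmf) \<Rightarrow> ereal" where
  "psi2 PX W = (INF Q\<in>(UNIV :: ('x \<times> 'x) pmf set).
       ereal (1/2) * kl_div Q (pair_pmf PX PX) + bhatt_dist_joint W Q)"

fun ereal_exp :: "ereal \<Rightarrow> ereal" where
  "ereal_exp (ereal r) = ereal (exp r)"
| "ereal_exp PInfty = PInfty"
| "ereal_exp MInfty = 0"

definition is_full_cycle :: "nat \<Rightarrow> (nat \<Rightarrow> nat) \<Rightarrow> bool" where
  "is_full_cycle K \<pi> \<longleftrightarrow> \<pi> permutes {1..K} \<and>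
     (\<forall>i\<in>{1..K}. \<forall>j\<in>{1..K}. \<exists>n. (\<pi> ^^ n) i = j)"

end

theory Submission
  imports Defs
begin



fun path :: "('x \<Rightarrow> 'x \<Rightarrow> real) \<Rightarrow> 'x \<Rightarrow> 'x list \<Rightarrow> 'x \<Rightarrow> real" where
  "path A a [] b = A a b"
| "path A a (c # cs) b = A a c * path A c cs b"

definition Gs :: "('x::finite \<Rightarrow> 'x \<Rightarrow> real) \<Rightarrow> nat \<Rightarrow> 'x \<Rightarrow> 'x \<Rightarrow> real" where
  "Gs A m a b = (\<Sum>cs\<in>{cs. set cs \<subseteq> UNIV \<and> length cs = m}. path A a cs b)"

definition Fr :: "('x::finite \<Rightarrow> 'x \<Rightarrow> real) \<Rightarrow> real" where
  "Fr B = (\<Sum>a\<in>UNIV. \<Sum>b\<in>UNIV. (B a b)\<^sup>2)"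

lemma path_nonneg: "(\<And>a b. A a b \<ge> 0) \<Longrightarrow> path A a cs b \<ge> 0"
  by (induction cs arbitrary: a) auto

lemma Gs_0: "Gs A 0 a b = A a b"
  by (simp add: Gs_def)

lemma Gs_Suc: "Gs A (Suc m) a b = (\<Sum>c\<in>UNIV. A a c * Gs A m c b)"
proof -
  have eq: "{cs::'a list. set cs \<subseteq> UNIV \<and> length cs = Suc m} =
        (\<lambda>(c, cs). c # cs) ` (UNIV \<times> {cs. set cs \<subseteq> UNIV \<and> length cs = m})"
    by (auto simp: length_Suc_conv image_iff)
  have inj: "inj_on (\<lambda>(c, cs). c # cs) (UNIV \<times> {cs::'a list. set cs \<subseteq> UNIV \<and> length cs = m})"
    by (auto simp: inj_on_def)
  have fin: "finite {cs::'a list. set cs \<subseteq> UNIV \<and> length cs = m}"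
    by (rule finite_lists_length_eq) simp
  have "(\<Sum>x\<in>UNIV \<times> {cs::'a list. set cs \<subseteq> UNIV \<and> length cs = m}. path A a (case x of (c, cs) \<Rightarrow> c # cs) b)
     = (\<Sum>(c, cs)\<in>UNIV \<times> {cs::'a list. set cs \<subseteq> UNIV \<and> length cs = m}. A a c * path A c cs b)"
    by (intro sum.cong) auto
  also have "\<dots> = (\<Sum>c\<in>UNIV. A a c * Gs A m c b)"
    by (simp add: sum.cartesian_product[symmetric] sum_distrib_left Gs_def)
  finally show ?thesis
    unfolding Gs_def eq sum.reindex[OF inj] by (simp add: comp_def)
qed

lemma Fr_nonneg: "Fr B \<ge> 0"
  unfolding Fr_def by (intro sum_nonneg) auto

lemma Fr_Gs: "Fr (Gs A m) \<le> Fr A ^ Suc m"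
proof (induction m)
  case 0
  then show ?case by (simp add: Gs_0[abs_def])
next
  case (Suc m)
  have "Fr (Gs A (Suc m)) = (\<Sum>a\<in>UNIV. \<Sum>b\<in>UNIV. (\<Sum>c\<in>UNIV. A a c * Gs A m c b)\<^sup>2)"
    by (simp add: Fr_def Gs_Suc)
  also have "\<dots> \<le> (\<Sum>a\<in>UNIV. \<Sum>b\<in>UNIV. (\<Sum>c\<in>UNIV. (A a c)\<^sup>2) * (\<Sum>c\<in>UNIV. (Gs A m c b)\<^sup>2))"
    by (intro sum_mono Cauchy_Schwarz_ineq_sum)
  also have "\<dots> = (\<Sum>a\<in>UNIV. \<Sum>c\<in>UNIV. (A a c)\<^sup>2) * (\<Sum>b\<in>UNIV. \<Sum>c\<in>UNIV. (Gs A m c b)\<^sup>2)"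
    by (simp add: sum_product)
  also have "(\<Sum>b\<in>UNIV. \<Sum>c\<in>UNIV. (Gs A m c b)\<^sup>2) = Fr (Gs A m)"
    unfolding Fr_def by (rule sum.swap)
  also have "(\<Sum>a\<in>UNIV. \<Sum>c\<in>UNIV. (A a c)\<^sup>2) = Fr A" by (simp add: Fr_def)
  also have "Fr A * Fr (Gs A m) \<le> Fr A * Fr A ^ Suc m"
    by (intro mult_left_mono Suc Fr_nonneg)
  finally show ?case by simp
qed

lemma sum_UNIV_pair:
  "(\<Sum>p\<in>(UNIV::('a::finite \<times> 'b::finite) set). f (fst p) (snd p)) = (\<Sum>a\<in>UNIV. \<Sum>b\<in>UNIV. f a b)"
  by (subst UNIV_Times_UNIV[symmetric]) (simp only: sum.cartesian_product split_def)

lemma trace_Gs: "(\<Sum>a\<in>UNIV. Gs A (Suc m) a a) \<le> sqrt (Fr A) ^ (Suc (Suc m))"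
proof -
  have "(\<Sum>a\<in>UNIV. Gs A (Suc m) a a) = (\<Sum>p\<in>UNIV. A (fst p) (snd p) * Gs A m (snd p) (fst p))"
    using sum_UNIV_pair[of "\<lambda>a c. A a c * Gs A m c a"] by (simp add: Gs_Suc sum_distrib_left)
  also have "\<dots> \<le> sqrt ((\<Sum>p\<in>UNIV. (A (fst p) (snd p))\<^sup>2) * (\<Sum>p\<in>UNIV. (Gs A m (snd p) (fst p))\<^sup>2))"
    by (rule real_le_rsqrt, rule Cauchy_Schwarz_ineq_sum)
  also have "(\<Sum>p\<in>UNIV. (A (fst p) (snd p))\<^sup>2) = Fr A"
    using sum_UNIV_pair[of "\<lambda>a b. (A a b)\<^sup>2"] by (simp add: Fr_def)
  also have "(\<Sum>p\<in>UNIV. (Gs A m (snd p) (fst p))\<^sup>2) = Fr (Gs A m)"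
    using sum_UNIV_pair[of "\<lambda>a b. (Gs A m b a)\<^sup>2"] sum.swap[of "\<lambda>a b. (Gs A m b a)\<^sup>2" UNIV UNIV] by (simp add: Fr_def)
  also have "sqrt (Fr A * Fr (Gs A m)) \<le> sqrt (Fr A * Fr A ^ Suc m)"
    by (intro real_sqrt_le_mono mult_left_mono Fr_Gs Fr_nonneg)
  also have "\<dots> = sqrt (Fr A) ^ (Suc (Suc m))"
    by (simp add: real_sqrt_mult real_sqrt_power)
  finally show ?thesis .
qed

lemma prod_path:
  "(\<Prod>n<Suc k. A (Z n) (Z (Suc n))) = path A (Z 0) (map Z [1..<Suc k]) (Z (Suc k))"
proof (induction k arbitrary: Z)
  case 0
  then show ?case by simp
next
  case (Suc k)
  have "(\<Prod>n<Suc (Suc k). A (Z n) (Z (Suc n))) = A (Z 0) (Z 1) * (\<Prod>n<Suc k. A ((Z \<circ> Suc) n) ((Z \<circ> Suc) (Suc n)))"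
    by (subst prod.lessThan_Suc_shift) simp
  also have "\<dots> = A (Z 0) (Z 1) * path A (Z 1) (map (Z \<circ> Suc) [1..<Suc k]) (Z (Suc (Suc k)))"
    using Suc[of "Z \<circ> Suc"] by (simp only: comp_apply One_nat_def o_def)
  finally have c1: "(\<Prod>n<Suc (Suc k). A (Z n) (Z (Suc n))) = A (Z 0) (Z 1) * path A (Z 1) (map (Z \<circ> Suc) [1..<Suc k]) (Z (Suc (Suc k)))" .
  have m: "map Z [1..<Suc (Suc k)] = Z 1 # map (Z \<circ> Suc) [1..<Suc k]"
    by (simp add: upt_conv_Cons map_Suc_upt[symmetric] del: upt_Suc)
  show ?case by (simp only: c1 m path.simps)
qed



lemma cycle_facts:
  fixes \<pi> :: "nat \<Rightarrow> nat"
  assumes cyc: "is_full_cycle K \<pi>" and K1: "K \<ge> 1"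
  shows "(\<pi> ^^ K) 1 = 1" "(\<lambda>n. (\<pi> ^^ n) 1) ` {..<K} = {1..K}" "inj_on (\<lambda>n. (\<pi> ^^ n) 1) {..<K}"
proof -
  define \<sigma> where "\<sigma> n = (\<pi> ^^ n) 1" for n
  have perm: "\<pi> permutes {1..K}" and reach: "\<forall>i\<in>{1..K}. \<forall>j\<in>{1..K}. \<exists>n. (\<pi> ^^ n) i = j"
    using cyc by (auto simp: is_full_cycle_def)
  have inS: "\<sigma> n \<in> {1..K}" for n
    unfolding \<sigma>_def by (rule permutes_in_funpow_image[OF perm]) (use K1 in auto)
  have injp: "inj (\<pi> ^^ i)" for i
    using bij_betw_funpow[OF permutes_bij[OF perm], of i] by (simp add: bij_betw_def)
  have "\<not> inj_on \<sigma> {0..K}"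
  proof
    assume "inj_on \<sigma> {0..K}"
    moreover have "\<sigma> ` {0..K} \<subseteq> {1..K}" using inS by blast
    ultimately have "card {0..K} \<le> card {1..K}" by (intro card_inj_on_le) auto
    then show False by simp
  qed
  then obtain i j where ij: "i \<in> {0..K}" "j \<in> {0..K}" "i \<noteq> j" "\<sigma> i = \<sigma> j"
    unfolding inj_on_def by blast
  have "\<exists>p. 0 < p \<and> p \<le> K \<and> \<sigma> p = 1"
  proof -
    have *: "\<sigma> (b - a) = 1" if "a < b" "\<sigma> a = \<sigma> b" for a b
    proof -
      have "(\<pi> ^^ a) ((\<pi> ^^ (b - a)) 1) = (\<pi> ^^ b) 1"
      proof -
        have "b = a + (b - a)" using that by simp
        then have "\<pi> ^^ b = \<pi> ^^ a \<circ> \<pi> ^^ (b - a)" by (metis funpow_add)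
        then show ?thesis by simp
      qed
      also have "\<dots> = (\<pi> ^^ a) 1" using that by (simp add: \<sigma>_def)
      finally show ?thesis using injp[of a] by (simp add: \<sigma>_def inj_on_def)
    qed
    show ?thesis
    proof (cases "i < j")
      case True then show ?thesis using *[of i j] ij by (intro exI[of _ "j - i"]) auto
    next
      case False then have "j < i" using ij by auto
      then show ?thesis using *[of j i] ij by (intro exI[of _ "i - j"]) auto
    qed
  qed
  then obtain p where p: "0 < p" "p \<le> K" "\<sigma> p = 1" by blast
  have per: "\<sigma> n = \<sigma> (n mod p)" for n
  proof -
    have fix1: "((\<pi> ^^ p) ^^ q) 1 = 1" for q
      using p(3) by (induction q) (auto simp: \<sigma>_def)
    have "\<sigma> n = (\<pi> ^^ (n mod p + p * (n div p))) 1" by (simp add: \<sigma>_def)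
    also have "\<dots> = \<sigma> (n mod p)"
      by (simp only: funpow_add funpow_mult[symmetric] comp_apply fix1 \<sigma>_def)
    finally show ?thesis .
  qed
  have sub: "{1..K} \<subseteq> \<sigma> ` {..<p}"
  proof
    fix j assume "j \<in> {1..K}"
    moreover have "(1::nat) \<in> {1..K}" using K1 by simp
    ultimately obtain n where "\<sigma> n = j" using reach unfolding \<sigma>_def by blast
    then show "j \<in> \<sigma> ` {..<p}" using per[of n] p(1) by auto
  qed
  have "K \<le> card (\<sigma> ` {..<p})" using card_mono[OF _ sub] by simp
  also have "\<dots> \<le> p" using card_image_le[of "{..<p}" \<sigma>] by simp
  finally have pK: "p = K" using p by simp
  show "(\<pi> ^^ K) 1 = 1" using p pK by (simp add: \<sigma>_def)
  have im: "\<sigma> ` {..<K} = {1..K}" using sub pK inS by auto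
  then show "(\<lambda>n. (\<pi> ^^ n) 1) ` {..<K} = {1..K}" by (simp add: \<sigma>_def[abs_def])
  have "inj_on \<sigma> {..<K}"
    by (rule eq_card_imp_inj_on) (use im in auto)
  then show "inj_on (\<lambda>n. (\<pi> ^^ n) 1) {..<K}" by (simp add: \<sigma>_def[abs_def])
qed

lemma bhatt_coeff_nonneg: "bhatt_coeff W a b \<ge> 0"
  unfolding bhatt_coeff_def by (intro sum_nonneg) auto

lemma bhatt_coeff_self: "bhatt_coeff W a a = 1"
proof -
  have "bhatt_coeff W a a = (\<Sum>y\<in>UNIV. pmf (W a) y)"
    unfolding bhatt_coeff_def by (intro sum.cong) (auto simp: real_sqrt_mult_self)
  also have "\<dots> = 1" by (rule sum_pmf_eq_1) auto
  finally show ?thesis .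
qed

lemma ereal_exp_inf[simp]: "ereal_exp \<infinity> = \<infinity>" "ereal_exp (- \<infinity>) = 0"
  by (simp_all only: infinity_ereal_def uminus_ereal.simps ereal_exp.simps)

lemma ereal_exp_mono: "x \<le> y \<Longrightarrow> ereal_exp x \<le> ereal_exp y"
  by (cases x; cases y) auto

lemma psi2_bound:
  fixes PX :: "'x::finite pmf" and W :: "'x \<Rightarrow> 'y::finite pmf"
  assumes full: "set_pmf PX = UNIV"
  defines "F \<equiv> (\<Sum>a\<in>UNIV. \<Sum>b\<in>UNIV. pmf PX a * pmf PX b * (bhatt_coeff W a b)\<^sup>2)"
  shows "F > 0" "psi2 PX W \<le> ereal (- ln F / 2)"
proof -
  let ?P = "pmf PX" and ?B = "bhatt_coeff W"
  have Ppos: "?P a > 0" for a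
    using full by (metis UNIV_I pmf_positive)
  define t where "t a b = ?P a * ?P b * (?B a b)\<^sup>2" for a b
  have tnn: "t a b \<ge> 0" for a b unfolding t_def by simp
  obtain a0 :: 'x where True by blast
  have "t a0 a0 \<le> (\<Sum>b\<in>UNIV. t a0 b)" by (rule member_le_sum) (auto simp: tnn)
  also have "\<dots> \<le> (\<Sum>a\<in>UNIV. \<Sum>b\<in>UNIV. t a b)"
    by (rule member_le_sum[where f="\<lambda>a. \<Sum>b\<in>UNIV. t a b"]) (auto intro!: sum_nonneg simp: tnn)
  finally have "t a0 a0 \<le> F" by (simp add: F_def t_def)
  moreover have "t a0 a0 > 0" using Ppos[of a0] by (simp add: t_def bhatt_coeff_self)
  ultimately show Fpos: "F > 0" by simp
  define q where "q z = t (fst z) (snd z) / F" for z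
  have qnn: "\<And>z. q z \<ge> 0" using Fpos tnn by (simp add: q_def)
  have qsum: "(\<Sum>z\<in>UNIV. q z) = 1"
  proof -
    have "(\<Sum>z\<in>UNIV. q z) = (\<Sum>z\<in>UNIV. t (fst z) (snd z)) / F"
      by (simp add: q_def sum_divide_distrib)
    also have "\<dots> = 1" using Fpos sum_UNIV_pair[of t] by (simp add: F_def t_def)
    finally show ?thesis .
  qed
  define Q where "Q = embed_pmf q"
  have pmfQ: "pmf Q z = q z" for z
    unfolding Q_def
    by (rule pmf_embed_pmf) (simp_all add: qnn qsum sum_ennreal nn_integral_count_space_finite)
  define kr where "kr z = (if q z = 0 then 0 else q z * ln (q z / (?P (fst z) * ?P (snd z))))" for z
  define dr where "dr z = (if q z = 0 then 0 else q z * (- ln (?B (fst z) (snd z))))" for z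
  have "kl_div Q (pair_pmf PX PX) = (\<Sum>z\<in>UNIV. ereal (kr z))"
    unfolding kl_div_def
  proof (intro sum.cong refl)
    fix z :: "'x \<times> 'x"
    obtain a b where z: "z = (a, b)" by fastforce
    have "pmf (pair_pmf PX PX) z \<noteq> 0" using Ppos[of a] Ppos[of b] by (simp add: z pmf_pair)
    then show "(if pmf Q z = 0 then 0 else if pmf (pair_pmf PX PX) z = 0 then \<infinity>
        else ereal (pmf Q z * ln (pmf Q z / pmf (pair_pmf PX PX) z))) = ereal (kr z)"
      by (simp add: pmfQ kr_def z pmf_pair)
  qed
  also have "\<dots> = ereal (\<Sum>z\<in>UNIV. kr z)" by simp
  finally have kl: "kl_div Q (pair_pmf PX PX) = ereal (\<Sum>z\<in>UNIV. kr z)" .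
  have "bhatt_dist_joint W Q = (\<Sum>z\<in>UNIV. ereal (dr z))"
    unfolding bhatt_dist_joint_def
  proof (intro sum.cong refl)
    fix z :: "'x \<times> 'x"
    obtain a b where z: "z = (a, b)" by fastforce
    show "ereal (pmf Q z) * bhatt_dist W (fst z) (snd z) = ereal (dr z)"
    proof (cases "q z = 0")
      case True then show ?thesis by (simp add: pmfQ dr_def zero_ereal_def[symmetric])
    next
      case False
      then have "?B a b \<noteq> 0" by (auto simp: q_def t_def z)
      then show ?thesis using False by (simp add: pmfQ dr_def bhatt_dist_def z)
    qed
  qed
  also have "\<dots> = ereal (\<Sum>z\<in>UNIV. dr z)" by simp
  finally have dj: "bhatt_dist_joint W Q = ereal (\<Sum>z\<in>UNIV. dr z)" .
  have trm: "kr z / 2 + dr z = - ln F / 2 * q z" for z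
  proof (cases "q z = 0")
    case True then show ?thesis by (simp add: kr_def dr_def)
  next
    case False
    obtain a b where z: "z = (a, b)" by fastforce
    have Bpos: "?B a b > 0" using False bhatt_coeff_nonneg[of W a b]
      by (auto simp: q_def t_def z)
    have e: "q z / (?P a * ?P b) = (?B a b)\<^sup>2 / F"
      using Ppos[of a] Ppos[of b] by (simp add: q_def t_def z field_simps)
    have L: "ln (q z / (?P a * ?P b)) = 2 * ln (?B a b) - ln F"
      unfolding e using Bpos Fpos by (simp add: ln_div ln_mult power2_eq_square)
    have "kr z / 2 + dr z = q z * (2 * ln (?B a b) - ln F) / 2 - q z * ln (?B a b)"
    proof -
      have fz: "fst z = a" "snd z = b" using z by auto
      show ?thesis using False by (simp only: kr_def dr_def fz L if_False)
    qed
    then show ?thesis by (simp add: algebra_simps)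
  qed
  have val: "ereal (1/2) * kl_div Q (pair_pmf PX PX) + bhatt_dist_joint W Q = ereal (- ln F / 2)"
  proof -
    have "ereal (1/2) * kl_div Q (pair_pmf PX PX) + bhatt_dist_joint W Q
        = ereal (\<Sum>z\<in>UNIV. kr z / 2 + dr z)"
      by (simp add: kl dj sum.distrib sum_divide_distrib)
    also have "\<dots> = ereal (- ln F / 2 * (\<Sum>z\<in>UNIV. q z))"
      by (simp add: trm sum_distrib_left)
    finally show ?thesis by (simp add: qsum)
  qed
  show "psi2 PX W \<le> ereal (- ln F / 2)"
    unfolding psi2_def val[symmetric] by (rule INF_lower) simp
qed




lemma exp_neg_sum_bhatt:
  assumes "finite J"
  shows "real_of_ereal (ereal_exp (- (\<Sum>j\<in>J. bhatt_dist W (u j) (v j))))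
       = (\<Prod>j\<in>J. bhatt_coeff W (u j) (v j))"
proof (cases "\<exists>j\<in>J. bhatt_coeff W (u j) (v j) = 0")
  case True
  then have "(\<Sum>j\<in>J. bhatt_dist W (u j) (v j)) = \<infinity>"
    using assms by (auto simp: sum_Pinfty bhatt_dist_def)
  moreover have "(\<Prod>j\<in>J. bhatt_coeff W (u j) (v j)) = 0"
    using True assms by (simp add: prod_zero_iff)
  ultimately show ?thesis by simp
next
  case False
  then have pos: "bhatt_coeff W (u j) (v j) > 0" if "j \<in> J" for j
    using that bhatt_coeff_nonneg[of W "u j" "v j"] by fastforce
  have "(\<Sum>j\<in>J. bhatt_dist W (u j) (v j)) = (\<Sum>j\<in>J. ereal (- ln (bhatt_coeff W (u j) (v j))))"
    using False by (intro sum.cong) (auto simp: bhatt_dist_def)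
  also have "\<dots> = ereal (\<Sum>j\<in>J. - ln (bhatt_coeff W (u j) (v j)))" by simp
  finally have s: "(\<Sum>j\<in>J. bhatt_dist W (u j) (v j)) = ereal (\<Sum>j\<in>J. - ln (bhatt_coeff W (u j) (v j)))" .
  have "exp (\<Sum>j\<in>J. ln (bhatt_coeff W (u j) (v j))) = (\<Prod>j\<in>J. bhatt_coeff W (u j) (v j))"
    using pos by (simp add: exp_sum[OF assms])
  then show ?thesis by (simp add: s sum_negf)
qed

theorem lemma2:
  fixes PX :: "'x::finite pmf" and W :: "'x \<Rightarrow> 'y::finite pmf"
    and K :: nat and \<pi> :: "nat \<Rightarrow> nat"
  assumes full_support: "set_pmf PX = UNIV"
    and K_ge: "K \<ge> 2"
    and cyc: "is_full_cycle K \<pi>"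
  shows "ereal (measure_pmf.expectation (Pi_pmf {1..K} undefined (\<lambda>_. PX))
            (\<lambda>X. real_of_ereal (ereal_exp (- (\<Sum>j\<in>{1..K}. bhatt_dist W (X j) (X (\<pi> j)))))))
         \<le> ereal_exp (- (ereal (real K) * psi2 PX W))"
proof -
  let ?P = "pmf PX" and ?B = "bhatt_coeff W"
  let ?M = "Pi_pmf {1..K} undefined (\<lambda>_. PX)"
  let ?f = "\<lambda>X. real_of_ereal (ereal_exp (- (\<Sum>j\<in>{1..K}. bhatt_dist W (X j) (X (\<pi> j)))))"
  define A where "A a b = sqrt (?P a) * ?B a b * sqrt (?P b)" for a b
  define \<sigma> where "\<sigma> n = (\<pi> ^^ n) 1" for n
  define S where "S = PiE_dflt {1..K} undefined (\<lambda>_. UNIV :: 'x set)"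
  define F where "F = (\<Sum>a\<in>UNIV. \<Sum>b\<in>UNIV. ?P a * ?P b * (?B a b)\<^sup>2)"
  have K1: "K \<ge> 1" using K_ge by simp
  note cf = cycle_facts[OF cyc K1]
  have \<sigma>K: "\<sigma> K = 1" using cf(1) by (simp add: \<sigma>_def)
  have \<sigma>0: "\<sigma> 0 = 1" by (simp add: \<sigma>_def)
  have im: "\<sigma> ` {..<K} = {1..K}" using cf(2) by (simp add: \<sigma>_def[abs_def])
  have inj: "inj_on \<sigma> {..<K}" using cf(3) by (simp add: \<sigma>_def[abs_def])
  have \<sigma>Suc: "\<pi> (\<sigma> n) = \<sigma> (Suc n)" for n by (simp add: \<sigma>_def)
  have perm: "\<pi> permutes {1..K}" using cyc by (simp add: is_full_cycle_def)
  have finS: "finite S" unfolding S_def by (intro finite_PiE_dflt) auto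
  have setM: "set_pmf ?M = S"
    unfolding S_def by (simp add: set_Pi_pmf full_support o_def)
  have Pnn: "?P a \<ge> 0" for a by simp
  have Ann: "A a b \<ge> 0" for a b by (simp add: A_def bhatt_coeff_nonneg)
  have E: "measure_pmf.expectation ?M ?f = (\<Sum>X\<in>S. pmf ?M X * ?f X)"
  proof -
    have "measure_pmf.expectation ?M ?f = (\<Sum>X\<in>S. pmf ?M X *\<^sub>R ?f X)"
      by (rule integral_measure_pmf[OF finS]) (use setM in blast)
    then show ?thesis by simp
  qed
  have step: "pmf ?M X * ?f X = path A (X 1) (map (X \<circ> \<sigma>) [1..<K]) (X 1)" if X: "X \<in> S" for X
  proof -
    have pM: "pmf ?M X = (\<Prod>j\<in>{1..K}. ?P (X j))"
      using X by (simp add: pmf_Pi S_def PiE_dflt_def)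
    have fX: "?f X = (\<Prod>j\<in>{1..K}. ?B (X j) (X (\<pi> j)))"
      by (rule exp_neg_sum_bhatt) simp
    have r: "(\<Prod>j\<in>{1..K}. sqrt (?P (X (\<pi> j)))) = (\<Prod>j\<in>{1..K}. sqrt (?P (X j)))"
      using prod.permute[OF perm, of "\<lambda>j. sqrt (?P (X j))"] by (simp add: o_def)
    have "(\<Prod>j\<in>{1..K}. A (X j) (X (\<pi> j)))
        = (\<Prod>j\<in>{1..K}. sqrt (?P (X j))) * (\<Prod>j\<in>{1..K}. ?B (X j) (X (\<pi> j))) * (\<Prod>j\<in>{1..K}. sqrt (?P (X (\<pi> j))))"
      by (simp add: A_def prod.distrib)
    also have "\<dots> = ((\<Prod>j\<in>{1..K}. sqrt (?P (X j))) * (\<Prod>j\<in>{1..K}. sqrt (?P (X j)))) * (\<Prod>j\<in>{1..K}. ?B (X j) (X (\<pi> j)))"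
      by (simp only: r mult_ac)
    also have "(\<Prod>j\<in>{1..K}. sqrt (?P (X j))) * (\<Prod>j\<in>{1..K}. sqrt (?P (X j))) = (\<Prod>j\<in>{1..K}. ?P (X j))"
      by (simp add: prod.distrib[symmetric])
    finally have c0: "(\<Prod>j\<in>{1..K}. A (X j) (X (\<pi> j))) = (\<Prod>j\<in>{1..K}. ?P (X j)) * (\<Prod>j\<in>{1..K}. ?B (X j) (X (\<pi> j)))" .
    have c1: "pmf ?M X * ?f X = (\<Prod>j\<in>{1..K}. A (X j) (X (\<pi> j)))"
      by (simp only: pM fX c0)
    have "(\<Prod>j\<in>{1..K}. A (X j) (X (\<pi> j))) = (\<Prod>n\<in>{..<K}. A (X (\<sigma> n)) (X (\<pi> (\<sigma> n))))"
      unfolding im[symmetric] by (simp add: prod.reindex[OF inj])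
    also have "\<dots> = (\<Prod>n<Suc (K - 1). A ((X \<circ> \<sigma>) n) ((X \<circ> \<sigma>) (Suc n)))"
      using K1 by (simp add: \<sigma>Suc)
    also have "\<dots> = path A ((X \<circ> \<sigma>) 0) (map (X \<circ> \<sigma>) [1..<Suc (K - 1)]) ((X \<circ> \<sigma>) (Suc (K - 1)))"
      by (rule prod_path)
    also have "\<dots> = path A (X 1) (map (X \<circ> \<sigma>) [1..<K]) (X 1)"
      using K1 by (simp add: \<sigma>0 \<sigma>K)
    finally show ?thesis using c1 by simp
  qed
  define \<Phi> where "\<Phi> X = (X 1, map (X \<circ> \<sigma>) [1..<K])" for X :: "nat \<Rightarrow> 'x"
  have inj\<Phi>: "inj_on \<Phi> S"
  proof (rule inj_onI)
    fix X Y assume X: "X \<in> S" and Y: "Y \<in> S" and eq: "\<Phi> X = \<Phi> Y"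
    then have e1: "X 1 = Y 1" and e2: "\<forall>n\<in>{1..<K}. X (\<sigma> n) = Y (\<sigma> n)"
      by (auto simp: \<Phi>_def map_eq_conv)
    show "X = Y"
    proof
      fix j
      show "X j = Y j"
      proof (cases "j \<in> {1..K}")
        case True
        then obtain n where n: "n < K" "j = \<sigma> n" using im by force
        show ?thesis
        proof (cases "n = 0")
          case True then show ?thesis using n e1 \<sigma>0 by simp
        next
          case False then show ?thesis using n e2 by auto
        qed
      next
        case False
        then show ?thesis using X Y by (simp add: S_def PiE_dflt_def)
      qed
    qed
  qed
  define L where "L = {cs :: 'x list. set cs \<subseteq> UNIV \<and> length cs = K - 1}"
  have finL: "finite L" unfolding L_def by (rule finite_lists_length_eq) simp
  have finUL: "finite ((UNIV :: 'x set) \<times> L)" using finL by simp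
  have "measure_pmf.expectation ?M ?f = (\<Sum>X\<in>S. path A (X 1) (map (X \<circ> \<sigma>) [1..<K]) (X 1))"
    unfolding E by (intro sum.cong refl step)
  also have "\<dots> = (\<Sum>q\<in>\<Phi> ` S. path A (fst q) (snd q) (fst q))"
    by (subst sum.reindex[OF inj\<Phi>]) (simp add: \<Phi>_def)
  also have "\<dots> \<le> (\<Sum>q\<in>(UNIV :: 'x set) \<times> L. path A (fst q) (snd q) (fst q))"
    by (rule sum_mono2[OF finUL]) (auto simp: \<Phi>_def L_def path_nonneg Ann)
  also have "\<dots> = (\<Sum>a\<in>UNIV. Gs A (K - 1) a a)"
    by (simp only: Gs_def L_def[symmetric] sum.cartesian_product split_def)
  also have "\<dots> \<le> sqrt (Fr A) ^ K"
    using trace_Gs[of A "K - 2"] K_ge by (simp add: Suc_diff_Suc numeral_2_eq_2)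
  also have "Fr A = F"
    unfolding Fr_def F_def A_def
    by (intro sum.cong refl) (simp add: power_mult_distrib)
  finally have lhs: "measure_pmf.expectation ?M ?f \<le> sqrt F ^ K" .
  have Fpos: "F > 0" and psi: "psi2 PX W \<le> ereal (- ln F / 2)"
    using psi2_bound[OF full_support, of W] by (simp_all add: F_def)
  have "ereal (real K) * psi2 PX W \<le> ereal (real K) * ereal (- ln F / 2)"
    by (rule ereal_mult_left_mono[OF psi]) simp
  then have "- (ereal (real K) * ereal (- ln F / 2)) \<le> - (ereal (real K) * psi2 PX W)"
    by (simp only: ereal_minus_le_minus)
  then have "ereal_exp (- (ereal (real K) * ereal (- ln F / 2))) \<le> ereal_exp (- (ereal (real K) * psi2 PX W))"
    by (rule ereal_exp_mono)
  note m1 = this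
  have m2: "ereal_exp (- (ereal (real K) * ereal (- ln F / 2))) = ereal (sqrt F ^ K)"
  proof -
    have e1: "- (ereal (real K) * ereal (- ln F / 2)) = ereal (real K * ln (sqrt F))"
      using Fpos by (simp add: ln_sqrt)
    have e2: "exp (real K * ln (sqrt F)) = sqrt F ^ K"
      using Fpos by (simp only: exp_of_nat_mult exp_ln real_sqrt_gt_zero)
    show ?thesis by (simp only: e1 e2 ereal_exp.simps)
  qed
  have m3: "ereal (measure_pmf.expectation ?M ?f) \<le> ereal (sqrt F ^ K)"
    using lhs by (simp only: ereal_less_eq(3))
  have m4: "ereal (sqrt F ^ K) \<le> ereal_exp (- (ereal (real K) * psi2 PX W))"
    using m1 unfolding m2 .
  show ?thesis by (rule order_trans[OF m3 m4])
qed


end
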